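(* Let $T_{p,q}(x)=\dfrac{U_p\left(\frac{\sin x}{x}\right)}{U_q(\cos x)}$ for $x\in(0,\pi/2)$ and $p,q\in\mathbb{R}$. Then (i) when $q>1$, $T_{p,q}$ is increasing on $(0,\pi/2)$ for $p\le3q-\frac85$; (ii) when $q=1$, $T_{p,q}$ is increasing on $(0,\pi/2)$ for $p\le\frac75$ and decreasing on $(0,\pi/2)$ for $p\ge\frac{\pi^2}{4}-1$; (iii) when $\frac{34}{35}<q<1$, $T_{p,q}$ is decreasing on $(0,\pi/2)$ for $p\ge\frac{\pi^2}{4}-1$; (iv) when $q\le\frac{34}{35}$, $T_{p,q}$ is decreasing on $(0,\pi/2)$ for $p\ge3q-\frac85$.
   Context: For $t\in(0,1)$: $U_p(t)=\frac{1-t^p}{p}$ if $p\ne0$ and $U_0(t)=-\ln t$. *)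

theory Defs
  imports "HOL-Analysis.Analysis"
begin

definition U :: "real \<Rightarrow> real \<Rightarrow> real" where
  "U p t = (if p = 0 then - ln t else (1 - t powr p) / p)"

definition T :: "real \<Rightarrow> real \<Rightarrow> real \<Rightarrow> real" where
  "T p q x = U p (sin x / x) / U q (cos x)"

definition strict_incr_on :: "real set \<Rightarrow> (real \<Rightarrow> real) \<Rightarrow> bool" where
  "strict_incr_on S f \<longleftrightarrow> (\<forall>x\<in>S. \<forall>y\<in>S. x < y \<longrightarrow> f x < f y)"

definition strict_decr_on :: "real set \<Rightarrow> (real \<Rightarrow> real) \<Rightarrow> bool" where
  "strict_decr_on S f \<longleftrightarrow> (\<forall>x\<in>S. \<forall>y\<in>S. x < y \<longrightarrow> f x > f y)"

end

theory Submission
  imports Defs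
begin


lemma sin_taylor_bound: "\<bar>sin x - (\<Sum>m<n. sin_coeff m * x ^ m)\<bar> \<le> inverse (fact n) * \<bar>x\<bar> ^ n"
  by (rule Maclaurin_sin_bound)

lemma cos_taylor_bound: "\<bar>cos x - (\<Sum>m<n. cos_coeff m * x ^ m)\<bar> \<le> inverse (fact n) * \<bar>x\<bar> ^ n"
proof -
  obtain t where "cos x = (\<Sum>m<n. cos_coeff m * x ^ m) + (cos(t + 1/2 * real n * pi) / fact n) * x ^ n"
    using Maclaurin_cos_expansion by blast
  then have "\<bar>cos x - (\<Sum>m<n. cos_coeff m * x ^ m)\<bar> = \<bar>cos(t + 1/2 * real n * pi)\<bar> / fact n * \<bar>x\<bar> ^ n"
    by (simp add: abs_mult power_abs)
  also have "\<dots> \<le> 1 / fact n * \<bar>x\<bar> ^ n"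
    by (intro mult_right_mono divide_right_mono) auto
  finally show ?thesis by (simp add: divide_inverse)
qed

lemma comb_bound:
  fixes A B T P E :: real
  assumes "0 \<le> A" "0 \<le> B" "\<bar>T - P\<bar> \<le> E"
  shows "(A - B) * T \<ge> (A - B) * P - (A + B) * E"
proof -
  have "\<bar>(A - B) * (T - P)\<bar> \<le> (A + B) * E"
  proof -
    have "\<bar>(A - B) * (T - P)\<bar> = \<bar>A - B\<bar> * \<bar>T - P\<bar>" by (simp add: abs_mult)
    also have "\<dots> \<le> (A + B) * E" using assms by (intro mult_mono) auto
    finally show ?thesis .
  qed
  then show ?thesis by (auto simp: algebra_simps abs_le_iff)
qed

lemma cos_tay_8: "\<bar>cos (y::real) - (1 + (- 1/2) * y^2 + (1/24) * y^4 + (- 1/720) * y^6)\<bar> \<le> (1/40320) * \<bar>y\<bar>^8"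
proof -
  have e: "(\<Sum>m<8. cos_coeff m * y ^ m) = (1 + (- 1/2) * y^2 + (1/24) * y^4 + (- 1/720) * y^6)" by (simp add: lessThan_nat_numeral cos_coeff_def fact_numeral field_simps)
  show ?thesis using cos_taylor_bound[of y 8] unfolding e by (simp add: fact_numeral field_simps)
qed

lemma cos_tay_10: "\<bar>cos (y::real) - (1 + (- 1/2) * y^2 + (1/24) * y^4 + (- 1/720) * y^6 + (1/40320) * y^8)\<bar> \<le> (1/3628800) * \<bar>y\<bar>^10"
proof -
  have e: "(\<Sum>m<10. cos_coeff m * y ^ m) = (1 + (- 1/2) * y^2 + (1/24) * y^4 + (- 1/720) * y^6 + (1/40320) * y^8)" by (simp add: lessThan_nat_numeral cos_coeff_def fact_numeral field_simps)
  show ?thesis using cos_taylor_bound[of y 10] unfolding e by (simp add: fact_numeral field_simps)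
qed

lemma cos_tay_12: "\<bar>cos (y::real) - (1 + (- 1/2) * y^2 + (1/24) * y^4 + (- 1/720) * y^6 + (1/40320) * y^8 + (- 1/3628800) * y^10)\<bar> \<le> (1/479001600) * \<bar>y\<bar>^12"
proof -
  have e: "(\<Sum>m<12. cos_coeff m * y ^ m) = (1 + (- 1/2) * y^2 + (1/24) * y^4 + (- 1/720) * y^6 + (1/40320) * y^8 + (- 1/3628800) * y^10)" by (simp add: lessThan_nat_numeral cos_coeff_def fact_numeral field_simps)
  show ?thesis using cos_taylor_bound[of y 12] unfolding e by (simp add: fact_numeral field_simps)
qed

lemma cos_tay_16: "\<bar>cos (y::real) - (1 + (- 1/2) * y^2 + (1/24) * y^4 + (- 1/720) * y^6 + (1/40320) * y^8 + (- 1/3628800) * y^10 + (1/479001600) * y^12 + (- 1/87178291200) * y^14)\<bar> \<le> (1/20922789888000) * \<bar>y\<bar>^16"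
proof -
  have e: "(\<Sum>m<16. cos_coeff m * y ^ m) = (1 + (- 1/2) * y^2 + (1/24) * y^4 + (- 1/720) * y^6 + (1/40320) * y^8 + (- 1/3628800) * y^10 + (1/479001600) * y^12 + (- 1/87178291200) * y^14)" by (simp add: lessThan_nat_numeral cos_coeff_def fact_numeral field_simps)
  show ?thesis using cos_taylor_bound[of y 16] unfolding e by (simp add: fact_numeral field_simps)
qed

lemma cos_tay_20: "\<bar>cos (y::real) - (1 + (- 1/2) * y^2 + (1/24) * y^4 + (- 1/720) * y^6 + (1/40320) * y^8 + (- 1/3628800) * y^10 + (1/479001600) * y^12 + (- 1/87178291200) * y^14 + (1/20922789888000) * y^16 + (- 1/6402373705728000) * y^18)\<bar> \<le> (1/2432902008176640000) * \<bar>y\<bar>^20"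
proof -
  have e: "(\<Sum>m<20. cos_coeff m * y ^ m) = (1 + (- 1/2) * y^2 + (1/24) * y^4 + (- 1/720) * y^6 + (1/40320) * y^8 + (- 1/3628800) * y^10 + (1/479001600) * y^12 + (- 1/87178291200) * y^14 + (1/20922789888000) * y^16 + (- 1/6402373705728000) * y^18)" by (simp add: lessThan_nat_numeral cos_coeff_def fact_numeral field_simps)
  show ?thesis using cos_taylor_bound[of y 20] unfolding e by (simp add: fact_numeral field_simps)
qed

lemma sin_tay_9: "\<bar>sin (y::real) - (y + (- 1/6) * y^3 + (1/120) * y^5 + (- 1/5040) * y^7)\<bar> \<le> (1/362880) * \<bar>y\<bar>^9"
proof -
  have e: "(\<Sum>m<9. sin_coeff m * y ^ m) = (y + (- 1/6) * y^3 + (1/120) * y^5 + (- 1/5040) * y^7)" by (simp add: lessThan_nat_numeral sin_coeff_def fact_numeral field_simps)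
  show ?thesis using sin_taylor_bound[of y 9] unfolding e by (simp add: fact_numeral field_simps)
qed

lemma sin_tay_11: "\<bar>sin (y::real) - (y + (- 1/6) * y^3 + (1/120) * y^5 + (- 1/5040) * y^7 + (1/362880) * y^9)\<bar> \<le> (1/39916800) * \<bar>y\<bar>^11"
proof -
  have e: "(\<Sum>m<11. sin_coeff m * y ^ m) = (y + (- 1/6) * y^3 + (1/120) * y^5 + (- 1/5040) * y^7 + (1/362880) * y^9)" by (simp add: lessThan_nat_numeral sin_coeff_def fact_numeral field_simps)
  show ?thesis using sin_taylor_bound[of y 11] unfolding e by (simp add: fact_numeral field_simps)
qed

lemma sin_tay_13: "\<bar>sin (y::real) - (y + (- 1/6) * y^3 + (1/120) * y^5 + (- 1/5040) * y^7 + (1/362880) * y^9 + (- 1/39916800) * y^11)\<bar> \<le> (1/6227020800) * \<bar>y\<bar>^13"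
proof -
  have e: "(\<Sum>m<13. sin_coeff m * y ^ m) = (y + (- 1/6) * y^3 + (1/120) * y^5 + (- 1/5040) * y^7 + (1/362880) * y^9 + (- 1/39916800) * y^11)" by (simp add: lessThan_nat_numeral sin_coeff_def fact_numeral field_simps)
  show ?thesis using sin_taylor_bound[of y 13] unfolding e by (simp add: fact_numeral field_simps)
qed

lemma sin_tay_17: "\<bar>sin (y::real) - (y + (- 1/6) * y^3 + (1/120) * y^5 + (- 1/5040) * y^7 + (1/362880) * y^9 + (- 1/39916800) * y^11 + (1/6227020800) * y^13 + (- 1/1307674368000) * y^15)\<bar> \<le> (1/355687428096000) * \<bar>y\<bar>^17"
proof -
  have e: "(\<Sum>m<17. sin_coeff m * y ^ m) = (y + (- 1/6) * y^3 + (1/120) * y^5 + (- 1/5040) * y^7 + (1/362880) * y^9 + (- 1/39916800) * y^11 + (1/6227020800) * y^13 + (- 1/1307674368000) * y^15)" by (simp add: lessThan_nat_numeral sin_coeff_def fact_numeral field_simps)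
  show ?thesis using sin_taylor_bound[of y 17] unfolding e by (simp add: fact_numeral field_simps)
qed

lemma E1_poly:
  fixes x :: real assumes "0 < x" "x < (11/7)"
  shows "0 < (2 * x) + (((x) - (0)) * (1 + (- 1/2) * (2 * x)^2 + (1/24) * (2 * x)^4 + (- 1/720) * (2 * x)^6) - ((x) + (0)) * ((1/40320) * (2 * x)^8)) + (((0) - ((3/2))) * ((2 * x) + (- 1/6) * (2 * x)^3 + (1/120) * (2 * x)^5 + (- 1/5040) * (2 * x)^7) - ((0) + ((3/2))) * ((1/362880) * (2 * x)^9))"
proof -
  have eq: "(2 * x) + (((x) - (0)) * (1 + (- 1/2) * (2 * x)^2 + (1/24) * (2 * x)^4 + (- 1/720) * (2 * x)^6) - ((x) + (0)) * ((1/40320) * (2 * x)^8)) + (((0) - ((3/2))) * ((2 * x) + (- 1/6) * (2 * x)^3 + (1/120) * (2 * x)^5 + (- 1/5040) * (2 * x)^7) - ((0) + ((3/2))) * ((1/362880) * (2 * x)^9)) = x^5 * ((9604/219615) * x^0 * ((11/7) - x)^4 + (38416/219615) * x^1 * ((11/7) - x)^3 + (31864/131769) * x^2 * ((11/7) - x)^2 + (88144/658845) * x^3 * ((11/7) - x)^1 + (203332/13835745) * x^4 * ((11/7) - x)^0)" by algebra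
  have "0 < (9604/219615) * x^0 * ((11/7) - x)^4 + (38416/219615) * x^1 * ((11/7) - x)^3 + (31864/131769) * x^2 * ((11/7) - x)^2 + (88144/658845) * x^3 * ((11/7) - x)^1 + (203332/13835745) * x^4 * ((11/7) - x)^0" using assms by (intro add_pos_nonneg) (auto intro!: mult_nonneg_nonneg mult_pos_pos add_nonneg_nonneg)
  moreover have "0 < x" using assms by simp
  ultimately show ?thesis unfolding eq by simp
qed

lemma E1:
  fixes x :: real assumes "0 < x" "x < (11/7)"
  shows "0 < (2 * x) + ((x) - (0)) * cos (2 * x) + ((0) - ((3/2))) * sin (2 * x)"
proof -
  have xpos: "0 < x" using assms by simp
  have h0: "\<bar>cos (2 * x) - (1 + (- 1/2) * (2 * x)^2 + (1/24) * (2 * x)^4 + (- 1/720) * (2 * x)^6)\<bar> \<le> ((1/40320) * (2 * x)^8)"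
    using cos_tay_8[of "(2 * x)"] xpos by (simp add: abs_of_pos)
  have c0: "((x) - (0)) * cos (2 * x) \<ge> ((x) - (0)) * (1 + (- 1/2) * (2 * x)^2 + (1/24) * (2 * x)^4 + (- 1/720) * (2 * x)^6) - ((x) + (0)) * ((1/40320) * (2 * x)^8)"
    by (rule comb_bound[OF _ _ h0]) (use xpos in \<open>auto intro!: add_nonneg_nonneg mult_nonneg_nonneg\<close>)
  have h1: "\<bar>sin (2 * x) - ((2 * x) + (- 1/6) * (2 * x)^3 + (1/120) * (2 * x)^5 + (- 1/5040) * (2 * x)^7)\<bar> \<le> ((1/362880) * (2 * x)^9)"
    using sin_tay_9[of "(2 * x)"] xpos by (simp add: abs_of_pos)
  have c1: "((0) - ((3/2))) * sin (2 * x) \<ge> ((0) - ((3/2))) * ((2 * x) + (- 1/6) * (2 * x)^3 + (1/120) * (2 * x)^5 + (- 1/5040) * (2 * x)^7) - ((0) + ((3/2))) * ((1/362880) * (2 * x)^9)"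
    by (rule comb_bound[OF _ _ h1]) (use xpos in \<open>auto intro!: add_nonneg_nonneg mult_nonneg_nonneg\<close>)
  have p: "0 < (2 * x) + (((x) - (0)) * (1 + (- 1/2) * (2 * x)^2 + (1/24) * (2 * x)^4 + (- 1/720) * (2 * x)^6) - ((x) + (0)) * ((1/40320) * (2 * x)^8)) + (((0) - ((3/2))) * ((2 * x) + (- 1/6) * (2 * x)^3 + (1/120) * (2 * x)^5 + (- 1/5040) * (2 * x)^7) - ((0) + ((3/2))) * ((1/362880) * (2 * x)^9))" by (rule E1_poly[OF assms])
  show ?thesis using c0 c1 p by linarith
qed

lemma E2_poly:
  fixes x :: real assumes "0 < x" "x < (11/7)"
  shows "0 < ((- 6) + 4 * x^2) + (((6) - (x^2)) * (1 + (- 1/2) * (2 * x)^2 + (1/24) * (2 * x)^4 + (- 1/720) * (2 * x)^6 + (1/40320) * (2 * x)^8) - ((6) + (x^2)) * ((1/3628800) * (2 * x)^10)) + ((((9/2) * x) - (0)) * ((2 * x) + (- 1/6) * (2 * x)^3 + (1/120) * (2 * x)^5 + (- 1/5040) * (2 * x)^7 + (1/362880) * (2 * x)^9) - (((9/2) * x) + (0)) * ((1/39916800) * (2 * x)^11))"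
proof -
  have eq: "((- 6) + 4 * x^2) + (((6) - (x^2)) * (1 + (- 1/2) * (2 * x)^2 + (1/24) * (2 * x)^4 + (- 1/720) * (2 * x)^6 + (1/40320) * (2 * x)^8) - ((6) + (x^2)) * ((1/3628800) * (2 * x)^10)) + ((((9/2) * x) - (0)) * ((2 * x) + (- 1/6) * (2 * x)^3 + (1/120) * (2 * x)^5 + (- 1/5040) * (2 * x)^7 + (1/362880) * (2 * x)^9) - (((9/2) * x) + (0)) * ((1/39916800) * (2 * x)^11)) = x^8 * ((1372/658845) * x^0 * ((11/7) - x)^4 + (5488/658845) * x^1 * ((11/7) - x)^3 + (116704/9882675) * x^2 * ((11/7) - x)^2 + (68768/9882675) * x^3 * ((11/7) - x)^1 + (183404/207536175) * x^4 * ((11/7) - x)^0)" by algebra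
  have "0 < (1372/658845) * x^0 * ((11/7) - x)^4 + (5488/658845) * x^1 * ((11/7) - x)^3 + (116704/9882675) * x^2 * ((11/7) - x)^2 + (68768/9882675) * x^3 * ((11/7) - x)^1 + (183404/207536175) * x^4 * ((11/7) - x)^0" using assms by (intro add_pos_nonneg) (auto intro!: mult_nonneg_nonneg mult_pos_pos add_nonneg_nonneg)
  moreover have "0 < x" using assms by simp
  ultimately show ?thesis unfolding eq by simp
qed

lemma E2:
  fixes x :: real assumes "0 < x" "x < (11/7)"
  shows "0 < ((- 6) + 4 * x^2) + ((6) - (x^2)) * cos (2 * x) + (((9/2) * x) - (0)) * sin (2 * x)"
proof -
  have xpos: "0 < x" using assms by simp
  have h0: "\<bar>cos (2 * x) - (1 + (- 1/2) * (2 * x)^2 + (1/24) * (2 * x)^4 + (- 1/720) * (2 * x)^6 + (1/40320) * (2 * x)^8)\<bar> \<le> ((1/3628800) * (2 * x)^10)"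
    using cos_tay_10[of "(2 * x)"] xpos by (simp add: abs_of_pos)
  have c0: "((6) - (x^2)) * cos (2 * x) \<ge> ((6) - (x^2)) * (1 + (- 1/2) * (2 * x)^2 + (1/24) * (2 * x)^4 + (- 1/720) * (2 * x)^6 + (1/40320) * (2 * x)^8) - ((6) + (x^2)) * ((1/3628800) * (2 * x)^10)"
    by (rule comb_bound[OF _ _ h0]) (use xpos in \<open>auto intro!: add_nonneg_nonneg mult_nonneg_nonneg\<close>)
  have h1: "\<bar>sin (2 * x) - ((2 * x) + (- 1/6) * (2 * x)^3 + (1/120) * (2 * x)^5 + (- 1/5040) * (2 * x)^7 + (1/362880) * (2 * x)^9)\<bar> \<le> ((1/39916800) * (2 * x)^11)"
    using sin_tay_11[of "(2 * x)"] xpos by (simp add: abs_of_pos)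
  have c1: "(((9/2) * x) - (0)) * sin (2 * x) \<ge> (((9/2) * x) - (0)) * ((2 * x) + (- 1/6) * (2 * x)^3 + (1/120) * (2 * x)^5 + (- 1/5040) * (2 * x)^7 + (1/362880) * (2 * x)^9) - (((9/2) * x) + (0)) * ((1/39916800) * (2 * x)^11)"
    by (rule comb_bound[OF _ _ h1]) (use xpos in \<open>auto intro!: add_nonneg_nonneg mult_nonneg_nonneg\<close>)
  have p: "0 < ((- 6) + 4 * x^2) + (((6) - (x^2)) * (1 + (- 1/2) * (2 * x)^2 + (1/24) * (2 * x)^4 + (- 1/720) * (2 * x)^6 + (1/40320) * (2 * x)^8) - ((6) + (x^2)) * ((1/3628800) * (2 * x)^10)) + ((((9/2) * x) - (0)) * ((2 * x) + (- 1/6) * (2 * x)^3 + (1/120) * (2 * x)^5 + (- 1/5040) * (2 * x)^7 + (1/362880) * (2 * x)^9) - (((9/2) * x) + (0)) * ((1/39916800) * (2 * x)^11))" by (rule E2_poly[OF assms])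
  show ?thesis using c0 c1 p by linarith
qed

lemma E3A_poly:
  fixes x :: real assumes "0 < x" "x < (7/5)"
  shows "0 < ((39476089/32000000) + (- 24523911/32000000) * x^2) + ((((7476089/32000000) * x^2) - ((39476089/32000000))) * (1 + (- 1/2) * (2 * x)^2 + (1/24) * (2 * x)^4 + (- 1/720) * (2 * x)^6 + (1/40320) * (2 * x)^8 + (- 1/3628800) * (2 * x)^10) - (((7476089/32000000) * x^2) + ((39476089/32000000))) * ((1/479001600) * (2 * x)^12)) + (((0) - ((15476089/16000000) * x)) * ((2 * x) + (- 1/6) * (2 * x)^3 + (1/120) * (2 * x)^5 + (- 1/5040) * (2 * x)^7 + (1/362880) * (2 * x)^9 + (- 1/39916800) * (2 * x)^11) - ((0) + ((15476089/16000000) * x)) * ((1/6227020800) * (2 * x)^13))"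
proof -
  have eq: "((39476089/32000000) + (- 24523911/32000000) * x^2) + ((((7476089/32000000) * x^2) - ((39476089/32000000))) * (1 + (- 1/2) * (2 * x)^2 + (1/24) * (2 * x)^4 + (- 1/720) * (2 * x)^6 + (1/40320) * (2 * x)^8 + (- 1/3628800) * (2 * x)^10) - (((7476089/32000000) * x^2) + ((39476089/32000000))) * ((1/479001600) * (2 * x)^12)) + (((0) - ((15476089/16000000) * x)) * ((2 * x) + (- 1/6) * (2 * x)^3 + (1/120) * (2 * x)^5 + (- 1/5040) * (2 * x)^7 + (1/362880) * (2 * x)^9 + (- 1/39916800) * (2 * x)^11) - ((0) + ((15476089/16000000) * x)) * ((1/6227020800) * (2 * x)^13)) = x^6 * ((549025/1084253184) * x^0 * ((7/5) - x)^8 + (549025/135531648) * x^1 * ((7/5) - x)^7 + (517711877/37948861440) * x^2 * ((7/5) - x)^6 + (477046631/18974430720) * x^3 * ((7/5) - x)^5 + (48971833703/1778852880000) * x^4 * ((7/5) - x)^4 + (32244315437/1778852880000) * x^5 * ((7/5) - x)^3 + (241496825235709/35221287024000000) * x^6 * ((7/5) - x)^2 + (22801141308109/17610643512000000) * x^7 * ((7/5) - x)^1 + (859632745752301/11446918282800000000) * x^8 * ((7/5) - x)^0)" by algebra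
  have "0 < (549025/1084253184) * x^0 * ((7/5) - x)^8 + (549025/135531648) * x^1 * ((7/5) - x)^7 + (517711877/37948861440) * x^2 * ((7/5) - x)^6 + (477046631/18974430720) * x^3 * ((7/5) - x)^5 + (48971833703/1778852880000) * x^4 * ((7/5) - x)^4 + (32244315437/1778852880000) * x^5 * ((7/5) - x)^3 + (241496825235709/35221287024000000) * x^6 * ((7/5) - x)^2 + (22801141308109/17610643512000000) * x^7 * ((7/5) - x)^1 + (859632745752301/11446918282800000000) * x^8 * ((7/5) - x)^0" using assms by (intro add_pos_nonneg) (auto intro!: mult_nonneg_nonneg mult_pos_pos add_nonneg_nonneg)
  moreover have "0 < x" using assms by simp
  ultimately show ?thesis unfolding eq by simp
qed

lemma E3A:
  fixes x :: real assumes "0 < x" "x < (7/5)"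
  shows "0 < ((39476089/32000000) + (- 24523911/32000000) * x^2) + (((7476089/32000000) * x^2) - ((39476089/32000000))) * cos (2 * x) + ((0) - ((15476089/16000000) * x)) * sin (2 * x)"
proof -
  have xpos: "0 < x" using assms by simp
  have h0: "\<bar>cos (2 * x) - (1 + (- 1/2) * (2 * x)^2 + (1/24) * (2 * x)^4 + (- 1/720) * (2 * x)^6 + (1/40320) * (2 * x)^8 + (- 1/3628800) * (2 * x)^10)\<bar> \<le> ((1/479001600) * (2 * x)^12)"
    using cos_tay_12[of "(2 * x)"] xpos by (simp add: abs_of_pos)
  have c0: "(((7476089/32000000) * x^2) - ((39476089/32000000))) * cos (2 * x) \<ge> (((7476089/32000000) * x^2) - ((39476089/32000000))) * (1 + (- 1/2) * (2 * x)^2 + (1/24) * (2 * x)^4 + (- 1/720) * (2 * x)^6 + (1/40320) * (2 * x)^8 + (- 1/3628800) * (2 * x)^10) - (((7476089/32000000) * x^2) + ((39476089/32000000))) * ((1/479001600) * (2 * x)^12)"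
    by (rule comb_bound[OF _ _ h0]) (use xpos in \<open>auto intro!: add_nonneg_nonneg mult_nonneg_nonneg\<close>)
  have h1: "\<bar>sin (2 * x) - ((2 * x) + (- 1/6) * (2 * x)^3 + (1/120) * (2 * x)^5 + (- 1/5040) * (2 * x)^7 + (1/362880) * (2 * x)^9 + (- 1/39916800) * (2 * x)^11)\<bar> \<le> ((1/6227020800) * (2 * x)^13)"
    using sin_tay_13[of "(2 * x)"] xpos by (simp add: abs_of_pos)
  have c1: "((0) - ((15476089/16000000) * x)) * sin (2 * x) \<ge> ((0) - ((15476089/16000000) * x)) * ((2 * x) + (- 1/6) * (2 * x)^3 + (1/120) * (2 * x)^5 + (- 1/5040) * (2 * x)^7 + (1/362880) * (2 * x)^9 + (- 1/39916800) * (2 * x)^11) - ((0) + ((15476089/16000000) * x)) * ((1/6227020800) * (2 * x)^13)"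
    by (rule comb_bound[OF _ _ h1]) (use xpos in \<open>auto intro!: add_nonneg_nonneg mult_nonneg_nonneg\<close>)
  have p: "0 < ((39476089/32000000) + (- 24523911/32000000) * x^2) + ((((7476089/32000000) * x^2) - ((39476089/32000000))) * (1 + (- 1/2) * (2 * x)^2 + (1/24) * (2 * x)^4 + (- 1/720) * (2 * x)^6 + (1/40320) * (2 * x)^8 + (- 1/3628800) * (2 * x)^10) - (((7476089/32000000) * x^2) + ((39476089/32000000))) * ((1/479001600) * (2 * x)^12)) + (((0) - ((15476089/16000000) * x)) * ((2 * x) + (- 1/6) * (2 * x)^3 + (1/120) * (2 * x)^5 + (- 1/5040) * (2 * x)^7 + (1/362880) * (2 * x)^9 + (- 1/39916800) * (2 * x)^11) - ((0) + ((15476089/16000000) * x)) * ((1/6227020800) * (2 * x)^13))" by (rule E3A_poly[OF assms])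
  show ?thesis using c0 c1 p by linarith
qed

lemma E3B_poly:
  fixes x :: real assumes "(7/5) \<le> x" "x < (11/7)"
  shows "0 < ((9578671/6250000) * x) + ((((2921329/6250000) * x^2) - ((3/2))) * ((2 * x) + (- 1/6) * (2 * x)^3 + (1/120) * (2 * x)^5 + (- 1/5040) * (2 * x)^7 + (1/362880) * (2 * x)^9) - (((2921329/6250000) * x^2) + ((3/2))) * ((1/39916800) * (2 * x)^11)) + ((((9171329/6250000) * x) - (0)) * (1 + (- 1/2) * (2 * x)^2 + (1/24) * (2 * x)^4 + (- 1/720) * (2 * x)^6 + (1/40320) * (2 * x)^8) - (((9171329/6250000) * x) + (0)) * ((1/3628800) * (2 * x)^10))"
proof -
  have eq: "((9578671/6250000) * x) + ((((2921329/6250000) * x^2) - ((3/2))) * ((2 * x) + (- 1/6) * (2 * x)^3 + (1/120) * (2 * x)^5 + (- 1/5040) * (2 * x)^7 + (1/362880) * (2 * x)^9) - (((2921329/6250000) * x^2) + ((3/2))) * ((1/39916800) * (2 * x)^11)) + ((((9171329/6250000) * x) - (0)) * (1 + (- 1/2) * (2 * x)^2 + (1/24) * (2 * x)^4 + (- 1/720) * (2 * x)^6 + (1/40320) * (2 * x)^8) - (((9171329/6250000) * x) + (0)) * ((1/3628800) * (2 * x)^10)) = x^0 * ((1351511188698182097100077577/20662426080000000000) * (x - (7/5))^0 * ((11/7) - x)^13 + (56640629319432478205443859119/45457337376000000000) * (x - (7/5))^1 * ((11/7) - x)^12 + (380785856998104418641441647/37881114480000000) * (x - (7/5))^2 * ((11/7)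 - x)^11 + (972707391719036211906849643/20662426080000000) * (x - (7/5))^3 * ((11/7) - x)^10 + (960386281139288270667276401/6611976345600000) * (x - (7/5))^4 * ((11/7) - x)^9 + (231288481387872238791483169/734664038400000) * (x - (7/5))^5 * ((11/7) - x)^8 + (27336837612265572855419473/55099802880000) * (x - (7/5))^6 * ((11/7) - x)^7 + (254731321729889726601383/440798423040) * (x - (7/5))^7 * ((11/7) - x)^6 + (2932140490332351430982843/5877312307200) * (x - (7/5))^8 * ((11/7) - x)^5 + (668421784878736949402419/2115832430592) * (x - (7/5))^9 * ((11/7) - x)^4 + (37778333626425312847619/264479053824) * (x - (7/5))^10 * ((11/7) - x)^3 + (963602469764705869945/22039921152) * (x - (7/5))^11 * ((11/7) - x)^2 + (17194934151815877832375/2115832430592) * (x - (7/5))^12 * ((11/7) - x)^1 + (10268833653204776241625/14810827014144) * (x - (7/5))^13 * ((11/7) - x)^0)" by algebra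
  have "0 < (1351511188698182097100077577/20662426080000000000) * (x - (7/5))^0 * ((11/7) - x)^13 + (56640629319432478205443859119/45457337376000000000) * (x - (7/5))^1 * ((11/7) - x)^12 + (380785856998104418641441647/37881114480000000) * (x - (7/5))^2 * ((11/7) - x)^11 + (972707391719036211906849643/20662426080000000) * (x - (7/5))^3 * ((11/7) - x)^10 + (960386281139288270667276401/6611976345600000) * (x - (7/5))^4 * ((11/7) - x)^9 + (231288481387872238791483169/734664038400000) * (x - (7/5))^5 * ((11/7) - x)^8 + (27336837612265572855419473/55099802880000) * (x - (7/5))^6 * ((11/7) - x)^7 + (254731321729889726601383/440798423040) * (x - (7/5))^7 * ((11/7) - x)^6 + (2932140490332351430982843/5877312307200) * (x - (7/5))^8 * ((11/7) - x)^5 + (668421784878736949402419/2115832430592) * (x - (7/5))^9 * ((11/7) - x)^4 + (37778333626425312847619/264479053824) * (x - (7/5))^10 * ((11/7) - x)^3 + (963602469764705869945/22039921152) * (x - (7/5))^11 * ((11/7) - x)^2 + (17194934151815877832375/2115832430592) * (x - (7/5))^12 * ((11/7) - x)^1 + (10268833653204776241625/14810827014144) * (x - (7/5))^13 * ((11/7) - x)^0" using assms by (intro add_pos_nonneg) (auto intro!: mult_nonneg_nonneg mult_pos_pos add_nonneg_nonneg)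
  moreover have "0 < x" using assms by simp
  ultimately show ?thesis unfolding eq by simp
qed

lemma E3B:
  fixes x :: real assumes "(7/5) \<le> x" "x < (11/7)"
  shows "0 < ((9578671/6250000) * x) + (((2921329/6250000) * x^2) - ((3/2))) * sin (2 * x) + (((9171329/6250000) * x) - (0)) * cos (2 * x)"
proof -
  have xpos: "0 < x" using assms by simp
  have h0: "\<bar>sin (2 * x) - ((2 * x) + (- 1/6) * (2 * x)^3 + (1/120) * (2 * x)^5 + (- 1/5040) * (2 * x)^7 + (1/362880) * (2 * x)^9)\<bar> \<le> ((1/39916800) * (2 * x)^11)"
    using sin_tay_11[of "(2 * x)"] xpos by (simp add: abs_of_pos)
  have c0: "(((2921329/6250000) * x^2) - ((3/2))) * sin (2 * x) \<ge> (((2921329/6250000) * x^2) - ((3/2))) * ((2 * x) + (- 1/6) * (2 * x)^3 + (1/120) * (2 * x)^5 + (- 1/5040) * (2 * x)^7 + (1/362880) * (2 * x)^9) - (((2921329/6250000) * x^2) + ((3/2))) * ((1/39916800) * (2 * x)^11)"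
    by (rule comb_bound[OF _ _ h0]) (use xpos in \<open>auto intro!: add_nonneg_nonneg mult_nonneg_nonneg\<close>)
  have h1: "\<bar>cos (2 * x) - (1 + (- 1/2) * (2 * x)^2 + (1/24) * (2 * x)^4 + (- 1/720) * (2 * x)^6 + (1/40320) * (2 * x)^8)\<bar> \<le> ((1/3628800) * (2 * x)^10)"
    using cos_tay_10[of "(2 * x)"] xpos by (simp add: abs_of_pos)
  have c1: "(((9171329/6250000) * x) - (0)) * cos (2 * x) \<ge> (((9171329/6250000) * x) - (0)) * (1 + (- 1/2) * (2 * x)^2 + (1/24) * (2 * x)^4 + (- 1/720) * (2 * x)^6 + (1/40320) * (2 * x)^8) - (((9171329/6250000) * x) + (0)) * ((1/3628800) * (2 * x)^10)"
    by (rule comb_bound[OF _ _ h1]) (use xpos in \<open>auto intro!: add_nonneg_nonneg mult_nonneg_nonneg\<close>)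
  have p: "0 < ((9578671/6250000) * x) + ((((2921329/6250000) * x^2) - ((3/2))) * ((2 * x) + (- 1/6) * (2 * x)^3 + (1/120) * (2 * x)^5 + (- 1/5040) * (2 * x)^7 + (1/362880) * (2 * x)^9) - (((2921329/6250000) * x^2) + ((3/2))) * ((1/39916800) * (2 * x)^11)) + ((((9171329/6250000) * x) - (0)) * (1 + (- 1/2) * (2 * x)^2 + (1/24) * (2 * x)^4 + (- 1/720) * (2 * x)^6 + (1/40320) * (2 * x)^8) - (((9171329/6250000) * x) + (0)) * ((1/3628800) * (2 * x)^10))" by (rule E3B_poly[OF assms])
  show ?thesis using c0 c1 p by linarith
qed

lemma E4_poly:
  fixes x :: real assumes "0 < x" "x < (11/7)"
  shows "0 < (0) + (((0) - (54 * x)) * (x + (- 1/6) * x^3 + (1/120) * x^5 + (- 1/5040) * x^7 + (1/362880) * x^9 + (- 1/39916800) * x^11 + (1/6227020800) * x^13 + (- 1/1307674368000) * x^15) - ((0) + (54 * x)) * ((1/355687428096000) * x^17)) + (((0) - (58 * x)) * ((3 * x) + (- 1/6) * (3 * x)^3 + (1/120) * (3 * x)^5 + (- 1/5040) * (3 * x)^7 + (1/362880) * (3 * x)^9 + (- 1/39916800) * (3 * x)^11 + (1/6227020800) * (3 * x)^13 + (- 1/1307674368000) * (3 * x)^15) - ((0) + (58 * x)) * ((1/355687428096000) * (3 * x)^17)) + (((81) - (108 * x^2)) * (1 + (- 1/2) * x^2 + (1/24) * x^4 + (- 1/720) * x^6 + (1/40320) * x^8 + (- 1/3628800) * x^10 +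 (1/479001600) * x^12 + (- 1/87178291200) * x^14) - ((81) + (108 * x^2)) * ((1/20922789888000) * x^16)) + (((12 * x^2) - (81)) * (1 + (- 1/2) * (3 * x)^2 + (1/24) * (3 * x)^4 + (- 1/720) * (3 * x)^6 + (1/40320) * (3 * x)^8 + (- 1/3628800) * (3 * x)^10 + (1/479001600) * (3 * x)^12 + (- 1/87178291200) * (3 * x)^14) - ((12 * x^2) + (81)) * ((1/20922789888000) * (3 * x)^16))"
proof -
  have eq: "(0) + (((0) - (54 * x)) * (x + (- 1/6) * x^3 + (1/120) * x^5 + (- 1/5040) * x^7 + (1/362880) * x^9 + (- 1/39916800) * x^11 + (1/6227020800) * x^13 + (- 1/1307674368000) * x^15) - ((0) + (54 * x)) * ((1/355687428096000) * x^17)) + (((0) - (58 * x)) * ((3 * x) + (- 1/6) * (3 * x)^3 + (1/120) * (3 * x)^5 + (- 1/5040) * (3 * x)^7 + (1/362880) * (3 * x)^9 + (- 1/39916800) * (3 * x)^11 + (1/6227020800) * (3 * x)^13 + (- 1/1307674368000) * (3 * x)^15) - ((0) + (58 * x)) * ((1/355687428096000) * (3 * x)^17)) + (((81) - (108 * x^2)) * (1 + (- 1/2) * x^2 + (1/24) * x^4 + (- 1/720) * x^6 + (1/40320) * x^8 + (- 1/3628800) * x^10 + (1/479001600) * x^12 + (- 1/87178291200) * x^14) - ((81) + (108 * x^2)) * ((1/20922789888000) * x^16)) + (((12 * x^2) - (81)) * (1 + (- 1/2) * (3 * x)^2 + (1/24) * (3 * x)^4 + (- 1/720) * (3 * x)^6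 + (1/40320) * (3 * x)^8 + (- 1/3628800) * (3 * x)^10 + (1/479001600) * (3 * x)^12 + (- 1/87178291200) * (3 * x)^14) - ((12 * x^2) + (81)) * ((1/20922789888000) * (3 * x)^16)) = x^10 * ((52706752/16076916075) * x^0 * ((11/7) - x)^8 + (421654016/16076916075) * x^1 * ((11/7) - x)^7 + (1446208736/16076916075) * x^2 * ((11/7) - x)^6 + (2774096192/16076916075) * x^3 * ((11/7) - x)^5 + (14098212184/69666636325) * x^4 * ((11/7) - x)^4 + (10359416928/69666636325) * x^5 * ((11/7) - x)^3 + (10321227823685807/154091452889088000) * x^6 * ((11/7) - x)^2 + (1305329131036847/77045726444544000) * x^7 * ((11/7) - x)^1 + (10960464675435949/6112294297933824000) * x^8 * ((11/7) - x)^0)" by algebra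
  have "0 < (52706752/16076916075) * x^0 * ((11/7) - x)^8 + (421654016/16076916075) * x^1 * ((11/7) - x)^7 + (1446208736/16076916075) * x^2 * ((11/7) - x)^6 + (2774096192/16076916075) * x^3 * ((11/7) - x)^5 + (14098212184/69666636325) * x^4 * ((11/7) - x)^4 + (10359416928/69666636325) * x^5 * ((11/7) - x)^3 + (10321227823685807/154091452889088000) * x^6 * ((11/7) - x)^2 + (1305329131036847/77045726444544000) * x^7 * ((11/7) - x)^1 + (10960464675435949/6112294297933824000) * x^8 * ((11/7) - x)^0" using assms by (intro add_pos_nonneg) (auto intro!: mult_nonneg_nonneg mult_pos_pos add_nonneg_nonneg)
  moreover have "0 < x" using assms by simp
  ultimately show ?thesis unfolding eq by simp
qed

lemma E4:
  fixes x :: real assumes "0 < x" "x < (11/7)"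
  shows "0 < (0) + ((0) - (54 * x)) * sin x + ((0) - (58 * x)) * sin (3 * x) + ((81) - (108 * x^2)) * cos x + ((12 * x^2) - (81)) * cos (3 * x)"
proof -
  have xpos: "0 < x" using assms by simp
  have h0: "\<bar>sin x - (x + (- 1/6) * x^3 + (1/120) * x^5 + (- 1/5040) * x^7 + (1/362880) * x^9 + (- 1/39916800) * x^11 + (1/6227020800) * x^13 + (- 1/1307674368000) * x^15)\<bar> \<le> ((1/355687428096000) * x^17)"
    using sin_tay_17[of "x"] xpos by (simp add: abs_of_pos)
  have c0: "((0) - (54 * x)) * sin x \<ge> ((0) - (54 * x)) * (x + (- 1/6) * x^3 + (1/120) * x^5 + (- 1/5040) * x^7 + (1/362880) * x^9 + (- 1/39916800) * x^11 + (1/6227020800) * x^13 + (- 1/1307674368000) * x^15) - ((0) + (54 * x)) * ((1/355687428096000) * x^17)"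
    by (rule comb_bound[OF _ _ h0]) (use xpos in \<open>auto intro!: add_nonneg_nonneg mult_nonneg_nonneg\<close>)
  have h1: "\<bar>sin (3 * x) - ((3 * x) + (- 1/6) * (3 * x)^3 + (1/120) * (3 * x)^5 + (- 1/5040) * (3 * x)^7 + (1/362880) * (3 * x)^9 + (- 1/39916800) * (3 * x)^11 + (1/6227020800) * (3 * x)^13 + (- 1/1307674368000) * (3 * x)^15)\<bar> \<le> ((1/355687428096000) * (3 * x)^17)"
    using sin_tay_17[of "(3 * x)"] xpos by (simp add: abs_of_pos)
  have c1: "((0) - (58 * x)) * sin (3 * x) \<ge> ((0) - (58 * x)) * ((3 * x) + (- 1/6) * (3 * x)^3 + (1/120) * (3 * x)^5 + (- 1/5040) * (3 * x)^7 + (1/362880) * (3 * x)^9 + (- 1/39916800) * (3 * x)^11 + (1/6227020800) * (3 * x)^13 + (- 1/1307674368000) * (3 * x)^15) - ((0) + (58 * x)) * ((1/355687428096000) * (3 * x)^17)"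
    by (rule comb_bound[OF _ _ h1]) (use xpos in \<open>auto intro!: add_nonneg_nonneg mult_nonneg_nonneg\<close>)
  have h2: "\<bar>cos x - (1 + (- 1/2) * x^2 + (1/24) * x^4 + (- 1/720) * x^6 + (1/40320) * x^8 + (- 1/3628800) * x^10 + (1/479001600) * x^12 + (- 1/87178291200) * x^14)\<bar> \<le> ((1/20922789888000) * x^16)"
    using cos_tay_16[of "x"] xpos by (simp add: abs_of_pos)
  have c2: "((81) - (108 * x^2)) * cos x \<ge> ((81) - (108 * x^2)) * (1 + (- 1/2) * x^2 + (1/24) * x^4 + (- 1/720) * x^6 + (1/40320) * x^8 + (- 1/3628800) * x^10 + (1/479001600) * x^12 + (- 1/87178291200) * x^14) - ((81) + (108 * x^2)) * ((1/20922789888000) * x^16)"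
    by (rule comb_bound[OF _ _ h2]) (use xpos in \<open>auto intro!: add_nonneg_nonneg mult_nonneg_nonneg\<close>)
  have h3: "\<bar>cos (3 * x) - (1 + (- 1/2) * (3 * x)^2 + (1/24) * (3 * x)^4 + (- 1/720) * (3 * x)^6 + (1/40320) * (3 * x)^8 + (- 1/3628800) * (3 * x)^10 + (1/479001600) * (3 * x)^12 + (- 1/87178291200) * (3 * x)^14)\<bar> \<le> ((1/20922789888000) * (3 * x)^16)"
    using cos_tay_16[of "(3 * x)"] xpos by (simp add: abs_of_pos)
  have c3: "((12 * x^2) - (81)) * cos (3 * x) \<ge> ((12 * x^2) - (81)) * (1 + (- 1/2) * (3 * x)^2 + (1/24) * (3 * x)^4 + (- 1/720) * (3 * x)^6 + (1/40320) * (3 * x)^8 + (- 1/3628800) * (3 * x)^10 + (1/479001600) * (3 * x)^12 + (- 1/87178291200) * (3 * x)^14) - ((12 * x^2) + (81)) * ((1/20922789888000) * (3 * x)^16)"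
    by (rule comb_bound[OF _ _ h3]) (use xpos in \<open>auto intro!: add_nonneg_nonneg mult_nonneg_nonneg\<close>)
  have p: "0 < (0) + (((0) - (54 * x)) * (x + (- 1/6) * x^3 + (1/120) * x^5 + (- 1/5040) * x^7 + (1/362880) * x^9 + (- 1/39916800) * x^11 + (1/6227020800) * x^13 + (- 1/1307674368000) * x^15) - ((0) + (54 * x)) * ((1/355687428096000) * x^17)) + (((0) - (58 * x)) * ((3 * x) + (- 1/6) * (3 * x)^3 + (1/120) * (3 * x)^5 + (- 1/5040) * (3 * x)^7 + (1/362880) * (3 * x)^9 + (- 1/39916800) * (3 * x)^11 + (1/6227020800) * (3 * x)^13 + (- 1/1307674368000) * (3 * x)^15) - ((0) + (58 * x)) * ((1/355687428096000) * (3 * x)^17)) + (((81) - (108 * x^2)) * (1 + (- 1/2) * x^2 + (1/24) * x^4 + (- 1/720) * x^6 + (1/40320) * x^8 + (- 1/3628800) * x^10 + (1/479001600) * x^12 + (- 1/87178291200) * x^14) - ((81) + (108 * x^2)) * ((1/20922789888000) * x^16)) + (((12 * x^2) - (81)) * (1 + (- 1/2) * (3 * x)^2 + (1/24) * (3 * x)^4 + (- 1/720) * (3 * x)^6 + (1/40320) * (3 * x)^8 + (- 1/3628800) * (3 * x)^10 + (1/479001600) * (3 * x)^12 + (- 1/87178291200) * (3 * x)^14) - ((12 * x^2) + (81)) * ((1/20922789888000) * (3 * x)^16))" by (rule E4_poly[OF assms])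
  show ?thesis using c0 c1 c2 c3 p by linarith
qed



lemma pi_lo: "6283/2000 < pi"
proof (rule ccontr)
  assume "\<not> 6283/2000 < pi"
  then have h: "pi/2 \<le> 6283/4000" by simp
  have "0 < cos (6283/4000::real)"
    using cos_tay_16[of "6283/4000"] unfolding abs_le_iff by (simp add: power_divide)
  moreover have "cos (6283/4000::real) = - sin (6283/4000 - pi/2)"
    by (simp add: sin_diff)
  moreover have "0 \<le> sin (6283/4000 - pi/2)"
    using h pi_ge_two by (intro sin_ge_zero) auto
  ultimately show False by simp
qed

lemma pi_hi: "pi < 3927/1250"
proof (rule ccontr)
  assume "\<not> pi < 3927/1250"
  then have h: "3927/2500 \<le> pi/2" by simp
  have "cos (3927/2500::real) < 0"
    using cos_tay_16[of "3927/2500"] unfolding abs_le_iff by (simp add: power_divide)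
  moreover have "0 \<le> cos (3927/2500::real)"
    using h by (intro cos_ge_zero) auto
  ultimately show False by simp
qed

lemma D_pos: assumes "0 < x" "x \<le> pi/2" shows "0 < sin x - x * cos x"
proof -
  have "(\<lambda>t. sin t - t * cos t) 0 < (\<lambda>t. sin t - t * cos t) x"
  proof (rule DERIV_pos_imp_increasing_open[OF assms(1)])
    fix t assume t: "0 < t" "t < x"
    have "((\<lambda>t. sin t - t * cos t) has_real_derivative t * sin t) (at t)"
      by (auto intro!: derivative_eq_intros simp: algebra_simps)
    moreover have "0 < t * sin t" using t assms by (intro mult_pos_pos sin_gt_zero) auto
    ultimately show "\<exists>y. ((\<lambda>t. sin t - t * cos t) has_real_derivative y) (at t) \<and> 0 < y" by blast
  next
    show "continuous_on {0..x} (\<lambda>t. sin t - t * cos t)" by (intro continuous_intros)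
  qed
  then show ?thesis by simp
qed

lemma sin_lt_x: assumes "0 < x" "x \<le> pi/2" shows "sin x < x"
proof -
  have "(\<lambda>t. t - sin t) 0 < (\<lambda>t. t - sin t) x"
  proof (rule DERIV_pos_imp_increasing_open[OF assms(1)])
    fix t assume t: "0 < t" "t < x"
    have "((\<lambda>t. t - sin t) has_real_derivative 1 - cos t) (at t)"
      by (auto intro!: derivative_eq_intros)
    moreover have "cos t < 1"
    proof -
      have "cos t < cos 0" using t assms by (intro cos_monotone_0_pi) auto
      then show ?thesis by simp
    qed
    ultimately show "\<exists>y. ((\<lambda>t. t - sin t) has_real_derivative y) (at t) \<and> 0 < y" by fastforce
  next
    show "continuous_on {0..x} (\<lambda>t. t - sin t)" by (intro continuous_intros)
  qed
  then show ?thesis by simp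
qed

lemma sin3: "sin (3 * (x::real)) = 3 * sin x - 4 * sin x ^ 3"
proof -
  have "sin (3 * x) = sin (2 * x + x)" by (simp add: algebra_simps)
  also have "\<dots> = 3 * sin x - 4 * sin x ^ 3"
    unfolding sin_add sin_double cos_double using sin_cos_squared_add[of x] by algebra
  finally show ?thesis .
qed

lemma basics:
  assumes "0 < x" "x < pi/2"
  shows "0 < sin x" "0 < cos x" "0 < sin x - x * cos x" "x < 11/7"
  using assms sin_gt_zero2 cos_gt_zero D_pos pi_hi by auto

lemma E1':
  assumes "0 < x" "x < pi/2"
  shows "0 < sin x / cos x - 3 * ((sin x - x * cos x) / (x * sin x))"
proof -
  note b = basics[OF assms]
  have e: "(2 * x) + ((x) - (0)) * cos (2 * x) + ((0) - ((3/2))) * sin (2 * x)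
     = x * sin x ^ 2 - 3 * cos x * (sin x - x * cos x)"
    unfolding cos_double sin_double using sin_cos_squared_add[of x] by algebra
  have "0 < x * sin x ^ 2 - 3 * cos x * (sin x - x * cos x)"
    using E1[of x] assms b unfolding e by simp
  moreover have "sin x / cos x - 3 * ((sin x - x * cos x) / (x * sin x))
     = (x * sin x ^ 2 - 3 * cos x * (sin x - x * cos x)) / (cos x * x * sin x)"
    using b assms by (simp add: field_simps power2_eq_square)
  ultimately show ?thesis using b assms by simp
qed

lemma E2':
  assumes "0 < x" "x < pi/2"
  shows "0 < x * sin x / (sin x - x * cos x) - 2 / x - cos x / sin x - (2/5) * ((sin x - x * cos x) / (x * sin x))"
proof -
  note b = basics[OF assms]
  have e: "((- 6) + 4 * x^2) + ((6) - (x^2)) * cos (2 * x) + (((9/2) * x) - (0)) * sin (2 * x)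
     = 5 * x^2 * sin x ^ 2 - 12 * sin x ^ 2 + 9 * x * sin x * cos x + 3 * x^2 * cos x ^ 2"
    unfolding cos_double sin_double using sin_cos_squared_add[of x] by algebra
  have "0 < 5 * x^2 * sin x ^ 2 - 12 * sin x ^ 2 + 9 * x * sin x * cos x + 3 * x^2 * cos x ^ 2"
    using E2[of x] assms b unfolding e by simp
  moreover have "x * sin x / (sin x - x * cos x) - 2 / x - cos x / sin x - (2/5) * ((sin x - x * cos x) / (x * sin x))
     = (5 * x^2 * sin x ^ 2 - 12 * sin x ^ 2 + 9 * x * sin x * cos x + 3 * x^2 * cos x ^ 2) / (5 * x * sin x * (sin x - x * cos x))"
    using b assms by (simp add: field_simps power2_eq_square)
  ultimately show ?thesis using b assms by simp
qed

lemma E4':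
  assumes "0 < x" "x < pi/2"
  shows "x * sin x / (sin x - x * cos x) - 2 / x - cos x / sin x - (2/5) * ((sin x - x * cos x) / (x * sin x))
     - (sin x / cos x - 3 * ((sin x - x * cos x) / (x * sin x))) / 35 < 0"
proof -
  note b = basics[OF assms]
  define H where "H = x * sin x ^ 2 * (sin x - x * cos x) + 105 * sin x * cos x * (sin x - x * cos x)
     - 35 * x^2 * sin x ^ 2 * cos x - 24 * cos x * (sin x - x * cos x)^2"
  have e: "(0) + ((0) - (54 * x)) * sin x + ((0) - (58 * x)) * sin (3 * x) + ((81) - (108 * x^2)) * cos x + ((12 * x^2) - (81)) * cos (3 * x)
     = 4 * H"
    unfolding H_def cos_treble_cos sin3 using sin_cos_squared_add[of x] by algebra
  have "0 < H"
    using E4[of x] assms b unfolding e by simp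
  moreover have "x * sin x / (sin x - x * cos x) - 2 / x - cos x / sin x - (2/5) * ((sin x - x * cos x) / (x * sin x))
     - (sin x / cos x - 3 * ((sin x - x * cos x) / (x * sin x))) / 35
     = - H / (35 * x * sin x * cos x * (sin x - x * cos x))"
    using b assms unfolding H_def by (simp add: field_simps power2_eq_square)
  ultimately show ?thesis using b assms by (simp add: divide_pos_pos)
qed

lemma G_pos:
  assumes "0 < x" "x < pi/2"
  shows "0 < 3 * sin x * (sin x - x * cos x) - x * x * sin x * sin x - (3 - pi^2/4) * (sin x - x * cos x) * (sin x - x * cos x)"
proof -
  define k where "k = 3 - pi^2/4"
  define G where "G t = 3 * sin t * (sin t - t * cos t) - t * t * sin t * sin t - k * (sin t - t * cos t) * (sin t - t * cos t)" for t
  define Gd where "Gd t = 3 * cos t * (sin t - t * cos t) + t * sin t * sin t - 2 * t * t * sin t * cos t - 2 * k * t * sin t * (sin t - t * cos t)" for t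
  have kbounds: "3 - (3927/1250)^2/4 < k" "k < 3 - (6283/2000)^2/4"
  proof -
    have "pi^2 < (3927/1250)^2" using pi_hi by (intro power_strict_mono) auto
    moreover have "(6283/2000)^2 < pi^2" using pi_lo by (intro power_strict_mono) auto
    ultimately show "3 - (3927/1250)^2/4 < k" "k < 3 - (6283/2000)^2/4" unfolding k_def by auto
  qed
  have "0 < G x"
  proof (cases "x < 7/5")
    case True
    note b = basics[OF assms]
    have e: "((39476089/32000000) + (- 24523911/32000000) * x^2) + (((7476089/32000000) * x^2) - ((39476089/32000000))) * cos (2 * x) + ((0) - ((15476089/16000000) * x)) * sin (2 * x)
       = 3 * sin x * (sin x - x * cos x) - x * x * sin x * sin x - (3 - (6283/2000)^2/4) * (sin x - x * cos x) * (sin x - x * cos x)"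
      unfolding cos_double sin_double using sin_cos_squared_add[of x] by algebra
    have "0 < 3 * sin x * (sin x - x * cos x) - x * x * sin x * sin x - (3 - (6283/2000)^2/4) * (sin x - x * cos x) * (sin x - x * cos x)"
      using E3A[of x] assms True unfolding e by simp
    moreover have "(3 - (6283/2000)^2/4) * ((sin x - x * cos x) * (sin x - x * cos x)) \<ge> k * ((sin x - x * cos x) * (sin x - x * cos x))"
      using kbounds by (intro mult_right_mono) auto
    ultimately show ?thesis unfolding G_def by (simp add: algebra_simps)
  next
    case False
    have "G (pi/2) < G x"
    proof (rule DERIV_neg_imp_decreasing[OF assms(2)])
      fix t assume t: "x \<le> t" "t \<le> pi/2"
      have t0: "0 < t" "t < 11/7" "7/5 \<le> t" using t False assms pi_hi by auto
      have st: "0 < sin t" using t t0 by (intro sin_gt_zero) auto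
      have Dt: "0 < sin t - t * cos t" using D_pos[of t] t0 t by auto
      have "(G has_real_derivative Gd t) (at t)"
        unfolding G_def Gd_def
        by (rule derivative_eq_intros refl | simp)+ (simp add: algebra_simps)
      moreover have "Gd t < 0"
      proof -
        have e: "((9578671/6250000) * t) + (((2921329/6250000) * t^2) - ((3/2))) * sin (2 * t) + (((9171329/6250000) * t) - (0)) * cos (2 * t)
          = - (3 * cos t * (sin t - t * cos t) + t * sin t * sin t - 2 * t * t * sin t * cos t - 2 * (3 - (3927/1250)^2/4) * t * sin t * (sin t - t * cos t))"
          unfolding cos_double sin_double using sin_cos_squared_add[of t] by algebra
        have "0 < - (3 * cos t * (sin t - t * cos t) + t * sin t * sin t - 2 * t * t * sin t * cos t - 2 * (3 - (3927/1250)^2/4) * t * sin t * (sin t - t * cos t))"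
          using E3B[of t] t0 unfolding e by simp
        moreover have "(3 - (3927/1250)^2/4) * (t * sin t * (sin t - t * cos t)) \<le> k * (t * sin t * (sin t - t * cos t))"
          using kbounds t0 st Dt by (intro mult_right_mono) auto
        ultimately show ?thesis unfolding Gd_def by (simp add: algebra_simps)
      qed
      ultimately show "\<exists>y. (G has_real_derivative y) (at t) \<and> y < 0" by blast
    qed
    moreover have "G (pi/2) = 0" unfolding G_def k_def by (simp add: power2_eq_square)
    ultimately show ?thesis by simp
  qed
  then show ?thesis unfolding G_def k_def .
qed

lemma E3':
  assumes "0 < x" "x < pi/2"
  shows "x * sin x / (sin x - x * cos x) - 2 / x - cos x / sin x - (pi^2/4 - 2) * ((sin x - x * cos x) / (x * sin x)) < 0"
proof -
  note b = basics[OF assms]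
  have "x * sin x / (sin x - x * cos x) - 2 / x - cos x / sin x - (pi^2/4 - 2) * ((sin x - x * cos x) / (x * sin x))
     = - (3 * sin x * (sin x - x * cos x) - x * x * sin x * sin x - (3 - pi^2/4) * (sin x - x * cos x) * (sin x - x * cos x)) / (x * sin x * (sin x - x * cos x))"
    using b assms by (simp add: field_simps power2_eq_square)
  moreover have "0 < x * sin x * (sin x - x * cos x)" using b assms by simp
  moreover have "- (3 * sin x * (sin x - x * cos x) - x * x * sin x * sin x - (3 - pi^2/4) * (sin x - x * cos x) * (sin x - x * cos x)) < 0"
    using G_pos[OF assms] by simp
  ultimately show ?thesis using divide_neg_pos by metis
qed

lemma mono_ratio:
  fixes f g F G h :: "real \<Rightarrow> real" and b x y :: real
  assumes f0: "(f \<longlongrightarrow> 0) (at_right 0)" and g0: "(g \<longlongrightarrow> 0) (at_right 0)"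
  and df: "\<And>x. 0 < x \<Longrightarrow> x < b \<Longrightarrow> (f has_real_derivative F x) (at x)"
  and dg: "\<And>x. 0 < x \<Longrightarrow> x < b \<Longrightarrow> (g has_real_derivative G x) (at x)"
  and Gpos: "\<And>x. 0 < x \<Longrightarrow> x < b \<Longrightarrow> 0 < G x"
  and FhG: "\<And>x. 0 < x \<Longrightarrow> x < b \<Longrightarrow> F x = h x * G x"
  and hinc: "\<And>x y. 0 < x \<Longrightarrow> x < y \<Longrightarrow> y < b \<Longrightarrow> h x < h y"
  and xy: "0 < x" "x < y" "y < b"
  shows "f x / g x < f y / g y"
proof -
  have mvt: "\<exists>\<xi>. a < \<xi> \<and> \<xi> < m \<and> f m - f a = h \<xi> * (g m - g a)"
    if am: "0 < a" "a < m" "m < b" for a m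
  proof -
    have "\<exists>g'c f'c c. (g has_real_derivative g'c) (at c) \<and> (f has_real_derivative f'c) (at c) \<and> a < c \<and> c < m \<and> (f m - f a) * g'c = (g m - g a) * f'c"
    proof (rule GMVT[OF am(2)])
      show "\<forall>x. a \<le> x \<and> x \<le> m \<longrightarrow> isCont f x" using am by (auto intro!: DERIV_isCont[OF df])
      show "\<forall>x. a \<le> x \<and> x \<le> m \<longrightarrow> isCont g x" using am by (auto intro!: DERIV_isCont[OF dg])
      show "\<forall>x. a < x \<and> x < m \<longrightarrow> f differentiable at x"
      proof (intro allI impI)
        fix t assume "a < t \<and> t < m"
        then have "(f has_real_derivative F t) (at t)" using am by (intro df) auto
        then show "f differentiable at t" unfolding real_differentiable_def by blast
      qed
      show "\<forall>x. a < x \<and> x < m \<longrightarrow> g differentiable at x"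
      proof (intro allI impI)
        fix t assume "a < t \<and> t < m"
        then have "(g has_real_derivative G t) (at t)" using am by (intro dg) auto
        then show "g differentiable at t" unfolding real_differentiable_def by blast
      qed
    qed
    then obtain g'c f'c c where c: "(g has_real_derivative g'c) (at c)" "(f has_real_derivative f'c) (at c)"
      "a < c" "c < m" "(f m - f a) * g'c = (g m - g a) * f'c" by blast
    have c0: "0 < c" "c < b" using c am by auto
    have "g'c = G c" by (rule DERIV_unique[OF c(1) dg[OF c0]])
    moreover have "f'c = F c" by (rule DERIV_unique[OF c(2) df[OF c0]])
    ultimately have "(f m - f a) * G c = ((g m - g a) * h c) * G c" using c FhG[of c] am by (simp add: algebra_simps)
    then have "f m - f a = (g m - g a) * h c" using Gpos[of c] c am by simp
    then show ?thesis using c by (auto simp: algebra_simps)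
  qed
  have gmono: "g a < g m" if "0 < a" "a < m" "m < b" for a m
  proof (rule DERIV_pos_imp_increasing[OF that(2)])
    fix t assume "a \<le> t" "t \<le> m"
    then have t: "0 < t" "t < b" using that by auto
    show "\<exists>y. (g has_real_derivative y) (at t) \<and> 0 < y" using dg[OF t] Gpos[OF t] by blast
  qed
  have evr: "eventually (\<lambda>a. 0 < a \<and> a < m) (at_right 0)" if "0 < m" for m :: real
    unfolding eventually_at_right_field using that by auto
  have gpos: "0 < g m" if m: "0 < m" "m < b" for m
  proof -
    have "0 \<le> g (m/2)"
    proof (rule tendsto_le[OF _ tendsto_const g0])
      show "eventually (\<lambda>a. g a \<le> g (m/2)) (at_right 0)"
        proof -
        have "eventually (\<lambda>a. 0 < a \<and> a < m/2) (at_right 0)" using m by (intro evr) simp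
        then show ?thesis
      proof eventually_elim
        case (elim a) then show ?case using gmono[of a "m/2"] m by simp
      qed
      qed
    qed simp
    moreover have "g (m/2) < g m" using m by (intro gmono) auto
    ultimately show ?thesis by simp
  qed
  have step1: "f m \<le> h m * g m" if m: "0 < m" "m < b" for m
  proof -
    have "f m - 0 \<le> h m * (g m - 0)"
    proof (rule tendsto_le[of "at_right 0" "\<lambda>a. h m * (g m - g a)" _ "\<lambda>a. f m - f a"])
      show "((\<lambda>a. h m * (g m - g a)) \<longlongrightarrow> h m * (g m - 0)) (at_right 0)"
        by (intro tendsto_intros g0)
      show "((\<lambda>a. f m - f a) \<longlongrightarrow> f m - 0) (at_right 0)"
        by (intro tendsto_intros f0)
      show "eventually (\<lambda>a. f m - f a \<le> h m * (g m - g a)) (at_right 0)"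
        using evr[OF m(1)]
      proof eventually_elim
        case (elim a)
        then obtain \<xi> where xi: "a < \<xi>" "\<xi> < m" "f m - f a = h \<xi> * (g m - g a)" using mvt m by blast
        have "h \<xi> < h m" using xi elim m by (intro hinc) auto
        moreover have "g a < g m" using elim m by (intro gmono) auto
        ultimately have "h \<xi> * (g m - g a) \<le> h m * (g m - g a)" by (intro mult_right_mono) auto
        then show ?case using xi(3) by simp
      qed
    qed simp
    then show ?thesis by simp
  qed
  obtain \<xi> where xi: "x < \<xi>" "\<xi> < y" "f y - f x = h \<xi> * (g y - g x)" using mvt xy by blast
  have gx: "0 < g x" "0 < g y" using gpos xy by auto
  have gxy: "g x < g y" using gmono xy by auto
  have "h x < h \<xi>" using xi xy by (intro hinc) auto
  then have "h x * (g y - g x) < h \<xi> * (g y - g x)" using gxy by (intro mult_strict_right_mono) auto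
  then have A: "f x + h x * (g y - g x) < f y" using xi by simp
  have B: "f x * (g y - g x) \<le> h x * g x * (g y - g x)" using step1[of x] xy gxy by (intro mult_right_mono) auto
  have "f x * g y < f y * g x"
  proof -
    have "f x * g y = f x * g x + f x * (g y - g x)" by (simp add: algebra_simps)
    also have "\<dots> \<le> f x * g x + h x * g x * (g y - g x)" using B by simp
    also have "\<dots> = (f x + h x * (g y - g x)) * g x" by (simp add: algebra_simps)
    also have "\<dots> < f y * g x" using A gx by (intro mult_strict_right_mono) auto
    finally show ?thesis .
  qed
  then show ?thesis using gx by (simp add: field_simps)
qed

lemma U_deriv:
  assumes "0 < t"
  shows "(U p has_real_derivative - (t powr (p - 1))) (at t)"
proof (cases "p = 0")
  case True
  have e: "U p = (\<lambda>t. - ln t)" using True by (auto simp: U_def)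
  have "((\<lambda>t. - ln t) has_real_derivative - (1 / t)) (at t)"
    using assms by (auto intro!: derivative_eq_intros)
  moreover have "t powr (p - 1) = 1 / t" using True assms by (simp add: powr_minus_divide)
  ultimately show ?thesis unfolding e by simp
next
  case False
  have e: "U p = (\<lambda>t. (1 - t powr p) / p)" using False by (auto simp: U_def)
  have "((\<lambda>t. (1 - t powr p) / p) has_real_derivative (0 - p * t powr (p - 1)) / p) (at t)"
    using assms by (auto intro!: derivative_eq_intros)
  then show ?thesis unfolding e using False by simp
qed

lemma U_tendsto:
  fixes w :: "real \<Rightarrow> real"
  assumes "(w \<longlongrightarrow> 1) F"
  shows "((\<lambda>x. U p (w x)) \<longlongrightarrow> 0) F"
proof (cases "p = 0")
  case True
  have "((\<lambda>x. - ln (w x)) \<longlongrightarrow> - ln 1) F" by (intro tendsto_intros assms) simp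
  then show ?thesis using True by (simp add: U_def)
next
  case False
  have "((\<lambda>x. (1 - w x powr p) / p) \<longlongrightarrow> (1 - 1 powr p) / p) F" using False by (intro tendsto_intros assms) simp_all
  then show ?thesis using False by (simp add: U_def)
qed

lemma sinc_tendsto: "((\<lambda>x::real. sin x / x) \<longlongrightarrow> 1) (at_right 0)"
proof -
  have "((\<lambda>y. (sin y - sin 0) / (y - 0)) \<longlongrightarrow> cos 0) (at (0::real))"
    using DERIV_sin[of 0] unfolding has_field_derivative_iff by simp
  then have "((\<lambda>x::real. sin x / x) \<longlongrightarrow> 1) (at 0)" by simp
  then show ?thesis by (rule tendsto_mono[OF at_le, rotated]) simp
qed

lemma cos_tendsto: "((\<lambda>x::real. cos x) \<longlongrightarrow> 1) (at_right 0)"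
proof -
  have "((\<lambda>x::real. cos x) \<longlongrightarrow> cos 0) (at_right 0)" by (intro tendsto_intros)
  then show ?thesis by simp
qed

definition Ld :: "real \<Rightarrow> real \<Rightarrow> real \<Rightarrow> real" where
  "Ld p q x = - (p - 1) * ((sin x - x * cos x) / (x * sin x))
     + (x * sin x / (sin x - x * cos x) - 2 / x - cos x / sin x) + (q - 1) * (sin x / cos x)"

definition LL :: "real \<Rightarrow> real \<Rightarrow> real \<Rightarrow> real" where
  "LL p q x = (p - 1) * ln (sin x / x) + ln (sin x - x * cos x) - 2 * ln x - (q - 1) * ln (cos x) - ln (sin x)"

definition Fh :: "real \<Rightarrow> real \<Rightarrow> real" where
  "Fh p x = (sin x / x) powr (p - 1) * ((sin x - x * cos x) / x^2)"

definition Gh :: "real \<Rightarrow> real \<Rightarrow> real" where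
  "Gh q x = cos x powr (q - 1) * sin x"

lemma LL_deriv:
  assumes "0 < x" "x < pi/2"
  shows "(LL p q has_real_derivative Ld p q x) (at x)"
proof -
  note b = basics[OF assms]
  have "((\<lambda>x. (p - 1) * ln (sin x / x) + ln (sin x - x * cos x) - 2 * ln x - (q - 1) * ln (cos x) - ln (sin x))
     has_real_derivative
     (p - 1) * (((cos x * x - sin x * 1) / (x * x)) / (sin x / x)) + (cos x - (1 * cos x + x * (- sin x))) / (sin x - x * cos x)
       - 2 * (1 / x) - (q - 1) * (- sin x / cos x) - cos x / sin x) (at x)"
    using b assms by (intro derivative_eq_intros) (auto simp: mult_ac)
  moreover have "(p - 1) * (((cos x * x - sin x * 1) / (x * x)) / (sin x / x)) + (cos x - (1 * cos x + x * (- sin x))) / (sin x - x * cos x)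
       - 2 * (1 / x) - (q - 1) * (- sin x / cos x) - cos x / sin x = Ld p q x"
  proof -
    have a: "((cos x * x - sin x * 1) / (x * x)) / (sin x / x) = - ((sin x - x * cos x) / (x * sin x))"
      using b assms by (simp add: field_simps)
    have c: "(cos x - (1 * cos x + x * (- sin x))) / (sin x - x * cos x) = x * sin x / (sin x - x * cos x)"
      by simp
    have d: "- sin x / cos x = - (sin x / cos x)" by simp
    have gen: "\<And>V X B C :: real. (p - 1) * (- V) + X - 2 * (1 / x) - (q - 1) * (- B) - C = - (p - 1) * V + (X - 2 / x - C) + (q - 1) * B"
      by (simp add: algebra_simps)
    show ?thesis unfolding Ld_def a c d by (rule gen)
  qed
  ultimately show ?thesis unfolding LL_def by simp
qed

lemma h_exp:
  assumes "0 < x" "x < pi/2"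
  shows "Fh p x / Gh q x = exp (LL p q x)"
proof -
  note b = basics[OF assms]
  have w: "0 < sin x / x" using b assms by simp
  have e2: "exp (2 * ln x) = x * x" using assms by (simp only: mult_2 exp_add exp_ln)
  have e1: "exp ((p - 1) * ln (sin x / x)) = (sin x / x) powr (p - 1)" using w b assms by (simp add: powr_def)
  have e3: "exp ((q - 1) * ln (cos x)) = cos x powr (q - 1)" using b by (simp add: powr_def)
  have e4: "exp (ln (sin x - x * cos x)) = sin x - x * cos x" using b by simp
  have e5: "exp (ln (sin x)) = sin x" using b by simp
  have "exp (LL p q x) = (sin x / x) powr (p - 1) * (sin x - x * cos x) / (x * x) / cos x powr (q - 1) / sin x"
    by (simp only: LL_def exp_diff exp_add e1 e2 e3 e4 e5)
  also have "\<dots> = Fh p x / Gh q x"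
    unfolding Fh_def Gh_def by (simp add: power2_eq_square)
  finally show ?thesis by simp
qed

lemma f_deriv:
  assumes "0 < x" "x < pi/2"
  shows "((\<lambda>x. U p (sin x / x)) has_real_derivative Fh p x) (at x)"
proof -
  note b = basics[OF assms]
  have w: "0 < sin x / x" using b assms by simp
  have d1: "((\<lambda>x. sin x / x) has_real_derivative (cos x * x - sin x * 1) / (x * x)) (at x)"
    using assms by (intro derivative_eq_intros) auto
  have "((\<lambda>x. U p (sin x / x)) has_real_derivative - ((sin x / x) powr (p - 1)) * ((cos x * x - sin x * 1) / (x * x))) (at x)"
    by (rule DERIV_chain2[OF U_deriv[OF w] d1])
  moreover have "- ((sin x / x) powr (p - 1)) * ((cos x * x - sin x * 1) / (x * x)) = Fh p x"
    unfolding Fh_def by (simp add: power2_eq_square field_simps)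
  ultimately show ?thesis by simp
qed

lemma g_deriv:
  assumes "0 < x" "x < pi/2"
  shows "((\<lambda>x. U q (cos x)) has_real_derivative Gh q x) (at x)" "0 < Gh q x"
proof -
  note b = basics[OF assms]
  have d1: "((\<lambda>x. cos x) has_real_derivative - sin x) (at x)"
    by (intro derivative_eq_intros) auto
  have "((\<lambda>x. U q (cos x)) has_real_derivative - (cos x powr (q - 1)) * (- sin x)) (at x)"
    by (rule DERIV_chain2[OF U_deriv[OF b(2)] d1])
  then show "((\<lambda>x. U q (cos x)) has_real_derivative Gh q x) (at x)" unfolding Gh_def by simp
  show "0 < Gh q x" unfolding Gh_def using b by simp
qed

lemma LL_mono:
  assumes "\<And>x. 0 < x \<Longrightarrow> x < pi/2 \<Longrightarrow> 0 < Ld p q x"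
  and "0 < x" "x < y" "y < pi/2"
  shows "LL p q x < LL p q y"
proof (rule DERIV_pos_imp_increasing[OF assms(3)])
  fix t assume "x \<le> t" "t \<le> y"
  then have t: "0 < t" "t < pi/2" using assms by auto
  show "\<exists>d. (LL p q has_real_derivative d) (at t) \<and> 0 < d" using LL_deriv[OF t] assms(1)[OF t] by blast
qed

lemma LL_anti:
  assumes "\<And>x. 0 < x \<Longrightarrow> x < pi/2 \<Longrightarrow> Ld p q x < 0"
  and "0 < x" "x < y" "y < pi/2"
  shows "LL p q x > LL p q y"
proof (rule DERIV_neg_imp_decreasing[OF assms(3)])
  fix t assume "x \<le> t" "t \<le> y"
  then have t: "0 < t" "t < pi/2" using assms by auto
  show "\<exists>d. (LL p q has_real_derivative d) (at t) \<and> d < 0" using LL_deriv[OF t] assms(1)[OF t] by blast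
qed

lemma T_incr:
  assumes "\<And>x. 0 < x \<Longrightarrow> x < pi/2 \<Longrightarrow> 0 < Ld p q x"
  shows "strict_incr_on {0<..<pi/2} (T p q)"
  unfolding strict_incr_on_def
proof (intro ballI impI)
  fix x y assume xy: "x \<in> {0<..<pi/2}" "y \<in> {0<..<pi/2}" "x < y"
  have "U p (sin x / x) / U q (cos x) < U p (sin y / y) / U q (cos y)"
  proof (rule mono_ratio[where f = "\<lambda>x. U p (sin x / x)" and g = "\<lambda>x. U q (cos x)"
      and F = "Fh p" and G = "Gh q" and h = "\<lambda>x. Fh p x / Gh q x" and b = "pi/2"])
    show "((\<lambda>x. U p (sin x / x)) \<longlongrightarrow> 0) (at_right 0)" by (rule U_tendsto[OF sinc_tendsto])
    show "((\<lambda>x. U q (cos x)) \<longlongrightarrow> 0) (at_right 0)" by (rule U_tendsto[OF cos_tendsto])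
    show "((\<lambda>x. U p (sin x / x)) has_real_derivative Fh p t) (at t)" if "0 < t" "t < pi/2" for t
      using f_deriv[OF that] .
    show "((\<lambda>x. U q (cos x)) has_real_derivative Gh q t) (at t)" if "0 < t" "t < pi/2" for t
      using g_deriv[OF that] by blast
    show "0 < Gh q t" if "0 < t" "t < pi/2" for t using g_deriv[OF that] by blast
    show "Fh p t = Fh p t / Gh q t * Gh q t" if "0 < t" "t < pi/2" for t using g_deriv(2)[where q=q, OF that] by simp
    show "Fh p s / Gh q s < Fh p t / Gh q t" if "0 < s" "s < t" "t < pi/2" for s t
      using LL_mono[OF assms that] h_exp[of s] h_exp[of t] that by simp
  qed (use xy in auto)
  then show "T p q x < T p q y" unfolding T_def .
qed

lemma T_decr:
  assumes "\<And>x. 0 < x \<Longrightarrow> x < pi/2 \<Longrightarrow> Ld p q x < 0"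
  shows "strict_decr_on {0<..<pi/2} (T p q)"
  unfolding strict_decr_on_def
proof (intro ballI impI)
  fix x y assume xy: "x \<in> {0<..<pi/2}" "y \<in> {0<..<pi/2}" "x < y"
  have "- U p (sin x / x) / U q (cos x) < - U p (sin y / y) / U q (cos y)"
  proof (rule mono_ratio[where f = "\<lambda>x. - U p (sin x / x)" and g = "\<lambda>x. U q (cos x)"
      and F = "\<lambda>x. - Fh p x" and G = "Gh q" and h = "\<lambda>x. - (Fh p x / Gh q x)" and b = "pi/2"])
    show "((\<lambda>x. - U p (sin x / x)) \<longlongrightarrow> 0) (at_right 0)"
      using tendsto_minus[OF U_tendsto[OF sinc_tendsto, of p]] by simp
    show "((\<lambda>x. U q (cos x)) \<longlongrightarrow> 0) (at_right 0)" by (rule U_tendsto[OF cos_tendsto])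
    show "((\<lambda>x. - U p (sin x / x)) has_real_derivative - Fh p t) (at t)" if "0 < t" "t < pi/2" for t
      using DERIV_minus[OF f_deriv[OF that]] .
    show "((\<lambda>x. U q (cos x)) has_real_derivative Gh q t) (at t)" if "0 < t" "t < pi/2" for t
      using g_deriv[OF that] by blast
    show "0 < Gh q t" if "0 < t" "t < pi/2" for t using g_deriv[OF that] by blast
    show "- Fh p t = - (Fh p t / Gh q t) * Gh q t" if "0 < t" "t < pi/2" for t using g_deriv(2)[where q=q, OF that] by simp
    show "- (Fh p s / Gh q s) < - (Fh p t / Gh q t)" if "0 < s" "s < t" "t < pi/2" for s t
      using LL_anti[OF assms that] h_exp[of s] h_exp[of t] that by simp
  qed (use xy in auto)
  then show "T p q x > T p q y" unfolding T_def by simp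
qed

lemma Ld_pos:
  assumes "1 \<le> q" "p \<le> 3 * q - 8/5" "0 < x" "x < pi/2"
  shows "0 < Ld p q x"
proof -
  note b = basics[OF assms(3,4)]
  define V where "V = (sin x - x * cos x) / (x * sin x)"
  define M where "M = x * sin x / (sin x - x * cos x) - 2 / x - cos x / sin x"
  define B where "B = sin x / cos x"
  have v: "0 < V" unfolding V_def using b assms by simp
  have e1: "0 < B - 3 * V" using E1'[OF assms(3,4)] unfolding B_def V_def .
  have e2: "0 < M - (2/5) * V" using E2'[OF assms(3,4)] unfolding M_def V_def .
  have n1: "0 \<le> (q - 1) * (B - 3 * V)" using e1 assms by simp
  have n2: "0 \<le> (3 * q - 8/5 - p) * V" using v assms by simp
  have gen: "\<And>V M B :: real. - (p - 1) * V + M + (q - 1) * B = (q - 1) * (B - 3 * V) + (M - (2/5) * V) + (3 * q - 8/5 - p) * V"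
    by (simp add: algebra_simps)
  have "Ld p q x = - (p - 1) * V + M + (q - 1) * B" unfolding Ld_def V_def M_def B_def ..
  then show ?thesis using gen[of V M B] e2 n1 n2 by linarith
qed

lemma Ld_neg1:
  assumes "q \<le> 1" "pi^2/4 - 1 \<le> p" "0 < x" "x < pi/2"
  shows "Ld p q x < 0"
proof -
  note b = basics[OF assms(3,4)]
  define V where "V = (sin x - x * cos x) / (x * sin x)"
  define M where "M = x * sin x / (sin x - x * cos x) - 2 / x - cos x / sin x"
  define B where "B = sin x / cos x"
  have v: "0 < V" unfolding V_def using b assms by simp
  have bb: "0 < B" unfolding B_def using b by simp
  have e3: "M - (pi^2/4 - 2) * V < 0" using E3'[OF assms(3,4)] unfolding M_def V_def .
  have n1: "(q - 1) * B \<le> 0" using bb assms by (simp add: mult_nonpos_nonneg)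
  have n2: "(pi^2/4 - 1 - p) * V \<le> 0" using v assms by (simp add: mult_nonpos_nonneg)
  have gen: "\<And>V M B :: real. - (p - 1) * V + M + (q - 1) * B = (M - (pi^2/4 - 2) * V) + (pi^2/4 - 1 - p) * V + (q - 1) * B"
    by (simp add: algebra_simps)
  have "Ld p q x = - (p - 1) * V + M + (q - 1) * B" unfolding Ld_def V_def M_def B_def ..
  then show ?thesis using gen[of V M B] e3 n1 n2 by linarith
qed

lemma Ld_neg2:
  assumes "q \<le> 34/35" "3 * q - 8/5 \<le> p" "0 < x" "x < pi/2"
  shows "Ld p q x < 0"
proof -
  note b = basics[OF assms(3,4)]
  define V where "V = (sin x - x * cos x) / (x * sin x)"
  define M where "M = x * sin x / (sin x - x * cos x) - 2 / x - cos x / sin x"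
  define B where "B = sin x / cos x"
  have v: "0 < V" unfolding V_def using b assms by simp
  have e1: "0 < B - 3 * V" using E1'[OF assms(3,4)] unfolding B_def V_def .
  have e4: "M - (2/5) * V - (B - 3 * V) / 35 < 0" using E4'[OF assms(3,4)] unfolding M_def V_def B_def .
  have n1: "(q - 1 + 1/35) * (B - 3 * V) \<le> 0" using e1 assms by (simp add: mult_nonpos_nonneg)
  have n2: "(3 * q - 8/5 - p) * V \<le> 0" using v assms by (simp add: mult_nonpos_nonneg)
  have gen: "\<And>V M B :: real. - (p - 1) * V + M + (q - 1) * B = (q - 1 + 1/35) * (B - 3 * V) + (M - (2/5) * V - (B - 3 * V) / 35) + (3 * q - 8/5 - p) * V"
    by (simp add: field_simps)
  have "Ld p q x = - (p - 1) * V + M + (q - 1) * B" unfolding Ld_def V_def M_def B_def ..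
  then show ?thesis using gen[of V M B] e4 n1 n2 by linarith
qed

theorem proposition1:
  fixes p q :: real
  shows "(q > 1 \<and> p \<le> 3 * q - 8 / 5 \<longrightarrow> strict_incr_on {0<..<pi/2} (T p q))
   \<and> (q = 1 \<and> p \<le> 7 / 5 \<longrightarrow> strict_incr_on {0<..<pi/2} (T p q))
   \<and> (q = 1 \<and> p \<ge> pi^2 / 4 - 1 \<longrightarrow> strict_decr_on {0<..<pi/2} (T p q))
   \<and> (34 / 35 < q \<and> q < 1 \<and> p \<ge> pi^2 / 4 - 1 \<longrightarrow> strict_decr_on {0<..<pi/2} (T p q))
   \<and> (q \<le> 34 / 35 \<and> p \<ge> 3 * q - 8 / 5 \<longrightarrow> strict_decr_on {0<..<pi/2} (T p q))"
proof (intro conjI impI)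
  assume a: "q > 1 \<and> p \<le> 3 * q - 8 / 5"
  show "strict_incr_on {0<..<pi/2} (T p q)" by (rule T_incr) (rule Ld_pos, use a in auto)
next
  assume a: "q = 1 \<and> p \<le> 7 / 5"
  show "strict_incr_on {0<..<pi/2} (T p q)" by (rule T_incr) (rule Ld_pos, use a in auto)
next
  assume a: "q = 1 \<and> p \<ge> pi^2 / 4 - 1"
  show "strict_decr_on {0<..<pi/2} (T p q)" by (rule T_decr) (rule Ld_neg1, use a in auto)
next
  assume a: "34 / 35 < q \<and> q < 1 \<and> p \<ge> pi^2 / 4 - 1"
  show "strict_decr_on {0<..<pi/2} (T p q)" by (rule T_decr) (rule Ld_neg1, use a in auto)
next
  assume a: "q \<le> 34 / 35 \<and> p \<ge> 3 * q - 8 / 5"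
  show "strict_decr_on {0<..<pi/2} (T p q)" by (rule T_decr) (rule Ld_neg2, use a in auto)
qed


end
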